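(* Let $K=\mathbb{Q}(\rho)$ be a simplest cubic field, where $\rho$ is a root of $x^3-ax^2-(a+3)x-1$ with $a\in\mathbb{Z}_{\geq-1}$, and let $\Delta=a^2+3a+9$. Suppose $p^2\mid\Delta$ for a prime $p>3$. Then there are integers $1\leq k,l\leq p-1$ such that $\frac{k+l\rho+\rho^2}{p}\in\mathcal{O}_K$. *)

theory Defs
  imports "HOL-Computational_Algebra.Polynomial" "HOL-Computational_Algebra.Primes"
begin

end

theory Submission
  imports Defs
begin
lemma ident:
  fixes p u v w n m s :: "'a::comm_ring_1"
  shows "(s^2 + p*n*s + p*m)^3 + p*(-3*m + 2*v + p*u*n - p*u^2)*(s^2 + p*n*s + p*m)^2 + p^2*(3*m^2 - 4*v*m + v^2 + 3*p*w*n + p*v*n^2 - 2*p*u*n*m - 2*p*u*w - p*u*v*n + 2*p*u^2*m)*(s^2 + p*n*s + p*m) + p^3*(- (m^3) + 2*v*m^2 - v^2*m - 3*p*w*n*m - p*w^2 - p*v*n^2*m + p*v*w*n + p*u*n*m^2 + 2*p*u*w*m + p*u*v*n*m - p*u^2*m^2 + p^2*w*n^3 - p^2*u*w*n^2) = (s^3 + (3*p*n - p*u)*s^2 + (p*v + 3*p^2*n^2 - 2*p^2*u*n)*s + (- (p^2*w) + p^2*v*n + p^3*n^3 - p^3*u*n^2)) * (s^3 + p*u*s^2 + p*v*s + p^2*w)"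
  by (simp add: algebra_simps power2_eq_square power3_eq_cube)

lemma algebraic_int_cubic:
  fixes z :: complex and b0 b1 b2 :: int
  assumes "z^3 + of_int b2 * z^2 + of_int b1 * z + of_int b0 = 0"
  shows "algebraic_int z"
proof (rule algebraic_int.intros[of "[:of_int b0, of_int b1, of_int b2, 1:]"])
  show "lead_coeff [:of_int b0, of_int b1, of_int b2, 1:] = (1::complex)" by simp
  show "\<forall>i. coeff [:of_int b0, of_int b1, of_int b2, 1:] i \<in> (\<int>::complex set)"
  proof
    fix i show "coeff [:of_int b0, of_int b1, of_int b2, 1:] i \<in> (\<int>::complex set)"
      by (cases i; cases "i - 1"; cases "i - 2"; auto simp: coeff_pCons split: nat.splits)
  qed
  show "poly [:of_int b0, of_int b1, of_int b2, 1:] z = 0"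
    using assms by (simp add: algebra_simps power2_eq_square power3_eq_cube)
qed

lemma key:
  fixes s :: complex and p u v w n m :: int
  assumes p: "p \<noteq> 0"
    and g: "s^3 + of_int p * of_int u * s^2 + of_int p * of_int v * s + of_int p^2 * of_int w = 0"
  shows "algebraic_int ((s^2 + of_int p * of_int n * s + of_int p * of_int m) / of_int p)"
proof -
  define P :: complex where "P = of_int p"
  define U :: complex where "U = of_int u"
  define V :: complex where "V = of_int v"
  define W :: complex where "W = of_int w"
  define N :: complex where "N = of_int n"
  define M :: complex where "M = of_int m"
  have P0: "P \<noteq> 0" using p by (simp add: P_def)
  define \<theta> where "\<theta> = (s^2 + P*N*s + P*M) / P"
  have t: "s^2 + P*N*s + P*M = P * \<theta>" using P0 by (simp add: \<theta>_def)
  define B2 where "B2 = -3*m + 2*v + p*u*n - p*u^2"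
  define B1 where "B1 = 3*m^2 - 4*v*m + v^2 + 3*p*w*n + p*v*n^2 - 2*p*u*n*m - 2*p*u*w - p*u*v*n + 2*p*u^2*m"
  define B0 where "B0 = - (m^3) + 2*v*m^2 - v^2*m - 3*p*w*n*m - p*w^2 - p*v*n^2*m + p*v*w*n + p*u*n*m^2 + 2*p*u*w*m + p*u*v*n*m - p*u^2*m^2 + p^2*w*n^3 - p^2*u*w*n^2"
  have "(s^2 + P*N*s + P*M)^3 + P*(-3*M + 2*V + P*U*N - P*U^2)*(s^2 + P*N*s + P*M)^2 + P^2*(3*M^2 - 4*V*M + V^2 + 3*P*W*N + P*V*N^2 - 2*P*U*N*M - 2*P*U*W - P*U*V*N + 2*P*U^2*M)*(s^2 + P*N*s + P*M) + P^3*(- (M^3) + 2*V*M^2 - V^2*M - 3*P*W*N*M - P*W^2 - P*V*N^2*M + P*V*W*N + P*U*N*M^2 + 2*P*U*W*M + P*U*V*N*M - P*U^2*M^2 + P^2*W*N^3 - P^2*U*W*N^2) = (s^3 + (3*P*N - P*U)*s^2 + (P*V + 3*P^2*N^2 - 2*P^2*U*N)*s + (- (P^2*W) + P^2*V*N + P^3*N^3 - P^3*U*N^2)) * (s^3 + P*U*s^2 + P*V*s + P^2*W)"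
    by (rule ident)
  also have "s^3 + P*U*s^2 + P*V*s + P^2*W = 0" using g by (simp add: P_def U_def V_def W_def)
  finally have E: "(P*\<theta>)^3 + P*(-3*M + 2*V + P*U*N - P*U^2)*(P*\<theta>)^2 + P^2*(3*M^2 - 4*V*M + V^2 + 3*P*W*N + P*V*N^2 - 2*P*U*N*M - 2*P*U*W - P*U*V*N + 2*P*U^2*M)*(P*\<theta>) + P^3*(- (M^3) + 2*V*M^2 - V^2*M - 3*P*W*N*M - P*W^2 - P*V*N^2*M + P*V*W*N + P*U*N*M^2 + 2*P*U*W*M + P*U*V*N*M - P*U^2*M^2 + P^2*W*N^3 - P^2*U*W*N^2) = 0"
    by (simp only: t mult_zero_right)
  have b2: "of_int B2 = -3*M + 2*V + P*U*N - P*U^2"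
    by (simp add: B2_def P_def U_def V_def W_def N_def M_def)
  have b1: "of_int B1 = 3*M^2 - 4*V*M + V^2 + 3*P*W*N + P*V*N^2 - 2*P*U*N*M - 2*P*U*W - P*U*V*N + 2*P*U^2*M"
    by (simp add: B1_def P_def U_def V_def W_def N_def M_def)
  have b0: "of_int B0 = - (M^3) + 2*V*M^2 - V^2*M - 3*P*W*N*M - P*W^2 - P*V*N^2*M + P*V*W*N + P*U*N*M^2 + 2*P*U*W*M + P*U*V*N*M - P*U^2*M^2 + P^2*W*N^3 - P^2*U*W*N^2"
    by (simp add: B0_def P_def U_def V_def W_def N_def M_def)
  have "P^3 * (\<theta>^3 + of_int B2 * \<theta>^2 + of_int B1 * \<theta> + of_int B0) = 0"
    unfolding b2 b1 b0 using E by (simp add: algebra_simps power2_eq_square power3_eq_cube)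
  then have "\<theta>^3 + of_int B2 * \<theta>^2 + of_int B1 * \<theta> + of_int B0 = 0" using P0 by simp
  then have "algebraic_int \<theta>" by (rule algebraic_int_cubic)
  then show ?thesis by (simp add: \<theta>_def P_def N_def M_def)
qed

theorem proposition4p2:
  fixes a :: int and p :: nat and \<rho> :: complex
  assumes "a \<ge> -1"
    and "\<rho> ^ 3 - of_int a * \<rho> ^ 2 - of_int (a + 3) * \<rho> - 1 = 0"
    and "prime p" and "p > 3"
    and "int p ^ 2 dvd a ^ 2 + 3 * a + 9"
  shows "\<exists>k l :: int. 1 \<le> k \<and> k \<le> int p - 1 \<and> 1 \<le> l \<and> l \<le> int p - 1 \<and>
           algebraic_int ((of_int k + of_int l * \<rho> + \<rho> ^ 2) / of_nat p)"
proof -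
  define P where "P = int p"
  have P3: "P > 3" using assms(4) by (simp add: P_def)
  have primeP: "prime P" using assms(3) by (simp add: P_def)
  have nd3: "\<not> P dvd 3" using P3 by (auto dest: zdvd_imp_le)
  have cop1: "coprime 3 P" using primeP nd3 by (simp add: prime_imp_coprime coprime_commute)
  have cop: "coprime 3 (P^2)" using cop1 by simp
  have cop27: "coprime 27 (P^2)" using cop coprime_power_left_iff[of 3 3 "P^2"] by simp
  obtain x y where xy: "3*x + P^2*y = 1"
  proof -
    obtain u v where "u * 3 + v * P^2 = gcd 3 (P^2)" using bezout_int by blast
    then show ?thesis using that cop by (metis coprime_iff_gcd_eq_1 mult.commute)
  qed
  obtain t where tD: "a^2 + 3*a + 9 = P^2 * t" using assms(5) unfolding P_def by (auto elim: dvdE)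
  define r where "r = a*x"
  define D where "D = 3*r - a"
  define e where "e = - (a*y)"
  have De: "D = P^2 * e"
  proof -
    have "D = a*(3*x) - a" by (simp add: D_def r_def)
    also have "3*x = 1 - P^2*y" using xy by simp
    finally show ?thesis by (simp add: e_def algebra_simps)
  qed
  define c1 where "c1 = 3*r^2 - 2*a*r - (a+3)"
  define c0 where "c0 = r^3 - a*r^2 - (a+3)*r - 1"
  have "3*c1 = - (a^2 + 3*a + 9) + D^2" unfolding c1_def D_def by (simp add: algebra_simps power2_eq_square)
  also have "\<dots> = P^2 * (P^2*e^2 - t)" unfolding tD De by (simp add: algebra_simps power2_eq_square)
  finally have "P^2 dvd 3 * c1" by simp
  then have "P^2 dvd c1" using coprime_dvd_mult_right_iff[of "P^2" 3 c1] cop by (simp add: coprime_commute)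
  then obtain v' where v': "c1 = P^2 * v'" by (auto elim: dvdE)
  have "27*c0 = - (2*a+3)*(a^2 + 3*a + 9) - 3*D*(a^2 + 3*a + 9) + D^3"
    unfolding c0_def D_def by (simp add: algebra_simps power2_eq_square power3_eq_cube)
  also have "\<dots> = P^2 * (- (2*a+3)*t - 3*D*t + D*P^2*e^2)" unfolding tD
    by (simp add: De algebra_simps power2_eq_square power3_eq_cube)
  finally have "P^2 dvd 27 * c0" by simp
  then have "P^2 dvd c0" using coprime_dvd_mult_right_iff[of "P^2" 27 c0] cop27 by (simp add: coprime_commute)
  then obtain w where w: "c0 = P^2 * w" by (auto elim: dvdE)
  define s where "s = \<rho> - of_int r"
  have g: "s^3 + of_int P * of_int (P*e) * s^2 + of_int P * of_int (P*v') * s + of_int P^2 * of_int w = 0"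
  proof -
    have "s^3 + of_int P * of_int (P*e) * s^2 + of_int P * of_int (P*v') * s + of_int P^2 * of_int w
       = s^3 + of_int D * s^2 + of_int c1 * s + of_int c0"
      by (simp add: De v' w power2_eq_square)
    also have "\<dots> = \<rho> ^ 3 - of_int a * \<rho> ^ 2 - of_int (a + 3) * \<rho> - 1"
      unfolding s_def D_def c1_def c0_def by (simp add: algebra_simps power2_eq_square power3_eq_cube)
    finally show ?thesis using assms(2) by simp
  qed
  have Pnz: "P \<noteq> 0" using P3 by simp
  have ndr: "\<not> P dvd r"
  proof
    assume "P dvd r"
    then have "P dvd a" using De D_def by algebra
    then have "P dvd 9" using tD by algebra
    then have "P dvd 3 * 3" by simp
    then show False using prime_dvd_mult_iff[OF primeP] nd3 by blast
  qed
  define l where "l = (-2*r) mod P"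
  define n where "n = - ((-2*r) div P)"
  have ln: "l + 2*r = P * n"
  proof -
    have "P * ((-2*r) div P) = -2*r - (-2*r) mod P" by (simp add: minus_mod_eq_mult_div)
    then show ?thesis unfolding l_def n_def by (simp only: mult_minus_right)
  qed
  define k where "k = (- (l*r + r^2)) mod P"
  define m where "m = - ((- (l*r + r^2)) div P)"
  have km: "k + l*r + r^2 = P * m"
  proof -
    have "P * ((- (l*r + r^2)) div P) = - (l*r + r^2) - (- (l*r + r^2)) mod P" by (simp add: minus_mod_eq_mult_div)
    then show ?thesis unfolding k_def m_def by (simp only: mult_minus_right)
  qed
  have l0: "l \<noteq> 0"
  proof
    assume "l = 0"
    then have "P dvd 2 * r" using ln by (metis add_0 dvd_triv_left)
    then show False using ndr primeP P3 by (metis numeral_less_iff prime_dvd_mult_iff primes_dvd_imp_eq semiring_norm(81) two_is_prime verit_comp_simplify1(1))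
  qed
  have k0: "k \<noteq> 0"
  proof
    assume "k = 0"
    then have "P dvd r * r" using km ln by algebra
    then show False using ndr primeP by (meson prime_dvd_mult_iff)
  qed
  have Ppos: "P > 0" using P3 by simp
  have lb: "1 \<le> l \<and> l \<le> P - 1"
  proof -
    have "0 \<le> l" "l < P" unfolding l_def using Ppos by simp_all
    then show ?thesis using l0 by linarith
  qed
  have kb: "1 \<le> k \<and> k \<le> P - 1"
  proof -
    have "0 \<le> k" "k < P" unfolding k_def using Ppos by simp_all
    then show ?thesis using k0 by linarith
  qed
  have eq: "of_int k + of_int l * \<rho> + \<rho> ^ 2 = s^2 + of_int P * of_int n * s + of_int P * of_int m"
  proof -
    have "of_int P * of_int n = (of_int l + 2 * of_int r :: complex)" using ln by (metis of_int_add of_int_mult of_int_numeral)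
    moreover have "of_int P * of_int m = (of_int k + of_int l * of_int r + of_int r ^2 :: complex)" using km
      by (metis of_int_add of_int_mult of_int_power)
    ultimately show ?thesis unfolding s_def by (simp add: algebra_simps power2_eq_square)
  qed
  have "algebraic_int ((of_int k + of_int l * \<rho> + \<rho> ^ 2) / of_nat p)"
    unfolding eq using key[OF Pnz g, of n m] by (simp add: P_def)
  then show ?thesis using lb kb unfolding P_def by blast
qed
end
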